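(* Let $\Omega\subseteq\mathbb{R}^d$ be open and work in the ultrapower described in the context with $\rho=\langle R_\varphi\rangle$. Then: (i) for $(f_\varphi)\in\mathcal{E}(\Omega)^{\mathcal{D}_0}$, $(f_\varphi)\in\mathcal{M}(\mathcal{E}(\Omega)^{\mathcal{D}_0})$ if and only if $\langle f_\varphi\rangle\in\mathcal{M}_\rho({}^*\mathcal{E}(\Omega))$; (ii) the map $\widehat{f_\varphi}\mapsto\widehat{\langle f_\varphi\rangle}$ is a well-defined isomorphism of differential algebras from $\widehat{\mathcal{E}(\Omega)^{\mathcal{D}_0}}$ onto ${}^\rho\mathcal{E}(\Omega)$.
   Context: Fix $\mathcal{D}_0=\mathcal{D}(\mathbb{R}^d)$. For $\varphi\in\mathcal{D}_0$ let $R_\varphi=\sup\{\|x\|:\varphi(x)\neq0\}$ if $\varphi\neq0$, $R_0=1$. For $n\in\mathbb{N}$, $\mathcal{D}_n$ is the set of $\varphi\in\mathcal{D}_0$ that are real-valued, even, with $R_\varphi\le1/n$, $\int\varphi=1$, $\int x^\alpha\varphi(x)dx=0$ for $1\le|\alpha|\le n$, $\int|\varphi|\le1+1/n$, and $\sup_x|\partial^\alpha\varphi(x)|\le R_\varphi^{-2(|\alpha|+d)}$ for $|\alpha|\le n$. $\mathcal{U}$ is a fixed free $\mathfrak c^+$-good ultrafilter on $\mathcal{D}_0$ containing every $\mathcal{D}_n$; "a.e." means on a set belonging to $\mathcal U$. Asymptotic functions: $\mathcal{E}(\Omega)=C^\infty(\Omega;\mathbb{C})$; $\mathcal{M}(\mathcal{E}(\Omega)^{\mathcal{D}_0})$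 = nets $(f_\varphi)$ in $\mathcal{E}(\Omega)$ such that for every compact $K\subset\Omega$ and $\alpha\in\mathbb{N}_0^d$ there is $m$ with $\sup_K|\partial^\alpha f_\varphi|\le R_\varphi^{-m}$ a.e.; $\mathcal{N}$ = nets with $\sup_K|\partial^\alpha f_\varphi|\le R_\varphi^{p}$ a.e. for all $K,\alpha,p\in\mathbb{N}$; $\widehat{\mathcal{E}(\Omega)^{\mathcal{D}_0}}=\mathcal{M}/\mathcal{N}$ with pointwise (in $\varphi$) operations and derivatives. Ultrapower (distributional non-standard model): two nets are equivalent if they agree a.e.; ${}^*\mathbb{R}$, ${}^*\mathbb{C}$, ${}^*\mathbb{R}^d$, ${}^*\mathcal{E}(\Omega)$ are the sets of classes $\langle\cdot\rangle$ of nets in $\mathbb{R},\mathbb{C},\mathbb{R}^d,\mathcal{E}(\Omega)$; ${}^*\Omega$ = classes of nets $(x_\varphi)$ with $x_\varphi\in\Omega$ a.e.; for $f=\langle f_\varphi\rangle$ and $\xi=\langle x_\varphi\rangle\in{}^*\Omega$, $f(\xi)=\langle f_\varphi(x_\varphi)\rangle$ and $\partial^\alpha f=\langle\partial^\alpha f_\varphi\rangle$; order and absolute values componentwise a.e.; standard objects embedded by constant nets. $\rho=\langle R_\varphi\rangle$. $\mathcal{M}_\rho({}^*\mathbb{C})=\{\zeta:|\zeta|\le\rho^{-m}\text{ some }m\in\mathbb{N}\}$, $\mathcal{N}_\rho({}^*\mathbb{C})=\{\zeta:|\zeta|<\rho^n\ \forall n\in\mathbb{N}\}$. $\mu(\Omega)=\{x+dx:x\in\Omega,\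 dx\in{}^*\mathbb{R}^d,\ \|dx\|<1/n\ \forall n\in\mathbb{N}\}$. $\mathcal{M}_\rho({}^*\mathcal{E}(\Omega))=\{f\in{}^*\mathcal{E}(\Omega):\partial^\alpha f(x)\in\mathcal{M}_\rho({}^*\mathbb{C})\ \forall\alpha\in\mathbb{N}_0^d,\ \forall x\in\mu(\Omega)\}$, $\mathcal{N}_\rho({}^*\mathcal{E}(\Omega))$ likewise with $\mathcal{N}_\rho({}^*\mathbb{C})$; ${}^\rho\mathcal{E}(\Omega)=\mathcal{M}_\rho({}^*\mathcal{E}(\Omega))/\mathcal{N}_\rho({}^*\mathcal{E}(\Omega))$ with classes $\widehat f$. *)

theory Defs
  imports "HOL-Analysis.Analysis"
begin

type_synonym 'd fn = "real^'d \<Rightarrow> complex"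
type_synonym 'd net = "'d fn \<Rightarrow> 'd fn"

definition partial :: "'d::finite \<Rightarrow> 'd fn \<Rightarrow> 'd fn" where
  "partial i f x = vector_derivative (\<lambda>t::real. f (x + t *\<^sub>R axis i 1)) (at 0)"

definition smooth_on :: "(real^'d::finite) set \<Rightarrow> 'd fn \<Rightarrow> bool" where
  "smooth_on \<Omega> f \<longleftrightarrow>
     (\<forall>is::'d list. continuous_on \<Omega> (foldr partial is f) \<and>
        (\<forall>i. \<forall>x\<in>\<Omega>. (\<lambda>t::real. foldr partial is f (x + t *\<^sub>R axis i 1)) differentiable (at 0)))"

definition enum_list :: "'d::finite list" where
  "enum_list = (SOME xs. distinct xs \<and> set xs = UNIV)"

definition dmulti :: "('d::finite \<Rightarrow> nat) \<Rightarrow> 'd fn \<Rightarrow> 'd fn" where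
  "dmulti \<alpha> f = fold (\<lambda>i g. (partial i ^^ \<alpha> i) g) enum_list f"

definition mabs :: "('d::finite \<Rightarrow> nat) \<Rightarrow> nat" where
  "mabs \<alpha> = (\<Sum>i\<in>UNIV. \<alpha> i)"

definition D0 :: "'d::finite fn set" where
  "D0 = {\<phi>. smooth_on UNIV \<phi> \<and> compact (closure {x. \<phi> x \<noteq> 0})}"

definition Rphi :: "'d::finite fn \<Rightarrow> real" where
  "Rphi \<phi> = (if \<forall>x. \<phi> x = 0 then 1 else Sup {norm x | x. \<phi> x \<noteq> 0})"

definition Dn :: "nat \<Rightarrow> 'd::finite fn set" where
  "Dn n = {\<phi>\<in>D0.
      (\<forall>x. Im (\<phi> x) = 0) \<and> (\<forall>x. \<phi> (- x) = \<phi> x) \<and> Rphi \<phi> \<le> 1 / real n \<and>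
      (LINT x|lborel. \<phi> x) = 1 \<and>
      (\<forall>\<alpha>. 1 \<le> mabs \<alpha> \<and> mabs \<alpha> \<le> n \<longrightarrow>
          (LINT x|lborel. complex_of_real (\<Prod>i\<in>UNIV. (x $ i) ^ \<alpha> i) * \<phi> x) = 0) \<and>
      (LINT x|lborel. norm (\<phi> x)) \<le> 1 + 1 / real n \<and>
      (\<forall>\<alpha>. mabs \<alpha> \<le> n \<longrightarrow>
          (\<forall>x. norm (dmulti \<alpha> \<phi> x) \<le> (1 / Rphi \<phi>) ^ (2 * (mabs \<alpha> + CARD('d)))))}"

definition ultrafilter_on :: "'a set \<Rightarrow> 'a set set \<Rightarrow> bool" where
  "ultrafilter_on I U \<longleftrightarrow> U \<subseteq> Pow I \<and> I \<in> U \<and> {} \<notin> U \<and>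
     (\<forall>A\<in>U. \<forall>B\<in>U. A \<inter> B \<in> U) \<and>
     (\<forall>A\<in>U. \<forall>B. A \<subseteq> B \<and> B \<subseteq> I \<longrightarrow> B \<in> U) \<and>
     (\<forall>A. A \<subseteq> I \<longrightarrow> A \<in> U \<or> I - A \<in> U)"

definition free_ultrafilter_on :: "'a set \<Rightarrow> 'a set set \<Rightarrow> bool" where
  "free_ultrafilter_on I U \<longleftrightarrow> ultrafilter_on I U \<and> (\<forall>x\<in>I. {x} \<notin> U)"

text \<open>Keisler's kappa-goodness for kappa = c^+: index cardinals lambda < c^+, i.e.
  |lambda| <= c, are represented by subsets A of the reals.\<close>
definition cplus_good :: "'a set set \<Rightarrow> bool" where
  "cplus_good U \<longleftrightarrow>
    (\<forall>(A::real set) (f::real set \<Rightarrow> 'a set).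
      (\<forall>s. finite s \<and> s \<subseteq> A \<longrightarrow> f s \<in> U) \<and>
      (\<forall>s t. finite t \<and> t \<subseteq> A \<and> s \<subseteq> t \<longrightarrow> f t \<subseteq> f s) \<longrightarrow>
      (\<exists>g::real set \<Rightarrow> 'a set.
         (\<forall>s. finite s \<and> s \<subseteq> A \<longrightarrow> g s \<in> U \<and> g s \<subseteq> f s) \<and>
         (\<forall>s t. finite s \<and> s \<subseteq> A \<and> finite t \<and> t \<subseteq> A \<longrightarrow> g (s \<union> t) = g s \<inter> g t)))"

definition ae :: "'d::finite fn set set \<Rightarrow> ('d fn \<Rightarrow> bool) \<Rightarrow> bool" where
  "ae U P \<longleftrightarrow> {\<phi>\<in>D0. P \<phi>} \<in> U"

definition net_in_E :: "(real^'d::finite) set \<Rightarrow> 'd net \<Rightarrow> bool" where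
  "net_in_E \<Omega> f \<longleftrightarrow> (\<forall>\<phi>\<in>D0. smooth_on \<Omega> (f \<phi>))"

definition Mod :: "'d::finite fn set set \<Rightarrow> (real^'d) set \<Rightarrow> 'd net \<Rightarrow> bool" where
  "Mod U \<Omega> f \<longleftrightarrow> net_in_E \<Omega> f \<and>
     (\<forall>K \<alpha>. compact K \<and> K \<subseteq> \<Omega> \<longrightarrow>
        (\<exists>m::nat. m \<ge> 1 \<and> ae U (\<lambda>\<phi>. \<forall>x\<in>K. norm (dmulti \<alpha> (f \<phi>) x) \<le> (1 / Rphi \<phi>) ^ m)))"

definition Neg :: "'d::finite fn set set \<Rightarrow> (real^'d) set \<Rightarrow> 'd net \<Rightarrow> bool" where
  "Neg U \<Omega> f \<longleftrightarrow> net_in_E \<Omega> f \<and>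
     (\<forall>K \<alpha> (p::nat). compact K \<and> K \<subseteq> \<Omega> \<and> p \<ge> 1 \<longrightarrow>
        ae U (\<lambda>\<phi>. \<forall>x\<in>K. norm (dmulti \<alpha> (f \<phi>) x) \<le> Rphi \<phi> ^ p))"

definition relMN :: "'d::finite fn set set \<Rightarrow> (real^'d) set \<Rightarrow> ('d net \<times> 'd net) set" where
  "relMN U \<Omega> = {(f, g). Mod U \<Omega> f \<and> Mod U \<Omega> g \<and> Neg U \<Omega> (\<lambda>\<phi> x. f \<phi> x - g \<phi> x)}"

definition Ehat :: "'d::finite fn set set \<Rightarrow> (real^'d) set \<Rightarrow> 'd net set set" where
  "Ehat U \<Omega> = {f. Mod U \<Omega> f} // relMN U \<Omega>"

section \<open>The ultrapower side (elements represented by nets; all predicates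
  below are invariant under a.e. equality)\<close>

definition star_Mrho :: "'d::finite fn set set \<Rightarrow> ('d fn \<Rightarrow> complex) \<Rightarrow> bool" where
  "star_Mrho U \<zeta> \<longleftrightarrow> (\<exists>m::nat. m \<ge> 1 \<and> ae U (\<lambda>\<phi>. norm (\<zeta> \<phi>) \<le> (1 / Rphi \<phi>) ^ m))"

definition star_Nrho :: "'d::finite fn set set \<Rightarrow> ('d fn \<Rightarrow> complex) \<Rightarrow> bool" where
  "star_Nrho U \<zeta> \<longleftrightarrow> (\<forall>n::nat. n \<ge> 1 \<longrightarrow> ae U (\<lambda>\<phi>. norm (\<zeta> \<phi>) < Rphi \<phi> ^ n))"

text \<open>The monad mu(Omega): points x + dx with x in Omega standard and dx infinitesimal.\<close>
definition monad :: "'d::finite fn set set \<Rightarrow> (real^'d) set \<Rightarrow> ('d fn \<Rightarrow> real^'d) \<Rightarrow> bool" where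
  "monad U \<Omega> \<xi> \<longleftrightarrow> (\<exists>x\<in>\<Omega>. \<forall>n::nat. n \<ge> 1 \<longrightarrow> ae U (\<lambda>\<phi>. norm (\<xi> \<phi> - x) < 1 / real n))"

definition Mrho_E :: "'d::finite fn set set \<Rightarrow> (real^'d) set \<Rightarrow> 'd net \<Rightarrow> bool" where
  "Mrho_E U \<Omega> f \<longleftrightarrow> net_in_E \<Omega> f \<and>
     (\<forall>\<alpha> \<xi>. monad U \<Omega> \<xi> \<longrightarrow> star_Mrho U (\<lambda>\<phi>. dmulti \<alpha> (f \<phi>) (\<xi> \<phi>)))"

definition Nrho_E :: "'d::finite fn set set \<Rightarrow> (real^'d) set \<Rightarrow> 'd net \<Rightarrow> bool" where
  "Nrho_E U \<Omega> f \<longleftrightarrow> net_in_E \<Omega> f \<and>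
     (\<forall>\<alpha> \<xi>. monad U \<Omega> \<xi> \<longrightarrow> star_Nrho U (\<lambda>\<phi>. dmulti \<alpha> (f \<phi>) (\<xi> \<phi>)))"

definition relRho :: "'d::finite fn set set \<Rightarrow> (real^'d) set \<Rightarrow> ('d net \<times> 'd net) set" where
  "relRho U \<Omega> = {(f, g). Mrho_E U \<Omega> f \<and> Mrho_E U \<Omega> g \<and> Nrho_E U \<Omega> (\<lambda>\<phi> x. f \<phi> x - g \<phi> x)}"

definition rhoE :: "'d::finite fn set set \<Rightarrow> (real^'d) set \<Rightarrow> 'd net set set" where
  "rhoE U \<Omega> = {f. Mrho_E U \<Omega> f} // relRho U \<Omega>"

text \<open>The map  class of (f_phi)  |->  class of <f_phi>.\<close>
definition Phi :: "'d::finite fn set set \<Rightarrow> (real^'d) set \<Rightarrow> 'd net set \<Rightarrow> 'd net set" where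
  "Phi U \<Omega> X = (\<Union>f\<in>X. relRho U \<Omega> `` {f})"

definition qadd :: "('d::finite net \<times> 'd net) set \<Rightarrow> 'd net set \<Rightarrow> 'd net set \<Rightarrow> 'd net set" where
  "qadd R X Y = \<Union>{R `` {\<lambda>\<phi> x. f \<phi> x + g \<phi> x} | f g. f \<in> X \<and> g \<in> Y}"

definition qmul :: "('d::finite net \<times> 'd net) set \<Rightarrow> 'd net set \<Rightarrow> 'd net set \<Rightarrow> 'd net set" where
  "qmul R X Y = \<Union>{R `` {\<lambda>\<phi> x. f \<phi> x * g \<phi> x} | f g. f \<in> X \<and> g \<in> Y}"

definition qscal :: "('d::finite net \<times> 'd net) set \<Rightarrow> complex \<Rightarrow> 'd net set \<Rightarrow> 'd net set" where
  "qscal R c X = \<Union>{R `` {\<lambda>\<phi> x. c * f \<phi> x} | f. f \<in> X}"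

definition qder :: "('d::finite net \<times> 'd net) set \<Rightarrow> ('d \<Rightarrow> nat) \<Rightarrow> 'd net set \<Rightarrow> 'd net set" where
  "qder R \<alpha> X = \<Union>{R `` {\<lambda>\<phi>. dmulti \<alpha> (f \<phi>)} | f. f \<in> X}"

definition qone :: "('d::finite net \<times> 'd net) set \<Rightarrow> 'd net set" where
  "qone R = R `` {\<lambda>\<phi> x. 1}"

end

theory Submission
  imports Defs
begin

lemma funpow_partial: "(partial i ^^ n) g = foldr partial (replicate n i) g"
proof (induction n)
  case 0 show ?case by simp
next
  case (Suc n) show ?case using Suc by (simp only: funpow.simps comp_apply replicate_Suc foldr_Cons)
qed

lemma fold_partial: "\<exists>L. \<forall>g. fold (\<lambda>i g. (partial i ^^ \<alpha> i) g) xs g = foldr partial L g"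
proof (induction xs)
  case Nil then show ?case by (intro exI[of _ "[]"]) simp
next
  case (Cons a xs)
  then obtain L where L: "\<forall>g. fold (\<lambda>i g. (partial i ^^ \<alpha> i) g) xs g = foldr partial L g" by blast
  show ?case
  proof (intro exI[of _ "L @ replicate (\<alpha> a) a"] allI)
    fix g
    have "fold (\<lambda>i g. (partial i ^^ \<alpha> i) g) (a # xs) g = fold (\<lambda>i g. (partial i ^^ \<alpha> i) g) xs ((partial a ^^ \<alpha> a) g)"
      by (simp only: fold_Cons comp_apply)
    also have "\<dots> = foldr partial L ((partial a ^^ \<alpha> a) g)" using L by blast
    also have "\<dots> = foldr partial (L @ replicate (\<alpha> a) a) g"
      by (simp only: foldr_append funpow_partial comp_apply)
    finally show "fold (\<lambda>i g. (partial i ^^ \<alpha> i) g) (a # xs) g = foldr partial (L @ replicate (\<alpha> a) a) g" .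
  qed
qed

lemma dmulti_foldr: "\<exists>L. \<forall>g. dmulti \<alpha> g = foldr partial L g"
  unfolding dmulti_def using fold_partial by blast

lemma line_open:
  fixes x e :: "'a::real_normed_vector"
  assumes "open \<Omega>" "x \<in> \<Omega>"
  shows "open {t::real. x + t *\<^sub>R e \<in> \<Omega>} \<and> 0 \<in> {t::real. x + t *\<^sub>R e \<in> \<Omega>}"
proof
  have "{t::real. x + t *\<^sub>R e \<in> \<Omega>} = (\<lambda>t. x + t *\<^sub>R e) -` \<Omega>" by auto
  moreover have "continuous_on UNIV (\<lambda>t::real. x + t *\<^sub>R e)" by (auto intro!: continuous_intros)
  ultimately show "open {t::real. x + t *\<^sub>R e \<in> \<Omega>}" using assms(1) open_vimage by metis
  show "0 \<in> {t::real. x + t *\<^sub>R e \<in> \<Omega>}" using assms by simp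
qed

lemma foldr_partial_diff:
  assumes "open \<Omega>" "smooth_on \<Omega> F" "smooth_on \<Omega> G"
  shows "\<forall>x\<in>\<Omega>. foldr partial L (\<lambda>x. F x - G x) x = foldr partial L F x - foldr partial L G x"
proof (induction L)
  case Nil then show ?case by simp
next
  case (Cons i L)
  show ?case
  proof
    fix x assume x: "x \<in> \<Omega>"
    define T where "T = {t::real. x + t *\<^sub>R axis i 1 \<in> \<Omega>}"
    have T: "open T" "0 \<in> T" using line_open[OF assms(1) x] unfolding T_def by auto
    have ev: "eventually (\<lambda>t. t \<in> UNIV \<longrightarrow> foldr partial L (\<lambda>x. F x - G x) (x + t *\<^sub>R axis i 1)
          = foldr partial L F (x + t *\<^sub>R axis i 1) - foldr partial L G (x + t *\<^sub>R axis i 1)) (nhds 0)"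
      using eventually_nhds_in_open[OF T] by eventually_elim (use Cons T_def in auto)
    have dF: "(\<lambda>t::real. foldr partial L F (x + t *\<^sub>R axis i 1)) differentiable (at 0)"
      using assms(2) x unfolding smooth_on_def by blast
    have dG: "(\<lambda>t::real. foldr partial L G (x + t *\<^sub>R axis i 1)) differentiable (at 0)"
      using assms(3) x unfolding smooth_on_def by blast
    have "foldr partial (i # L) (\<lambda>x. F x - G x) x =
       vector_derivative (\<lambda>t. foldr partial L (\<lambda>x. F x - G x) (x + t *\<^sub>R axis i 1)) (at 0)"
      by (simp only: foldr_Cons comp_apply partial_def)
    also have "\<dots> = vector_derivative (\<lambda>t. foldr partial L F (x + t *\<^sub>R axis i 1)
          - foldr partial L G (x + t *\<^sub>R axis i 1)) (at 0)"
      by (rule vector_derivative_cong_eq[OF ev]) auto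
    also have "\<dots> = foldr partial (i # L) F x - foldr partial (i # L) G x"
      using vector_derivative_diff_at[OF dF dG] by (simp only: foldr_Cons comp_apply partial_def)
    finally show "foldr partial (i # L) (\<lambda>x. F x - G x) x = foldr partial (i # L) F x - foldr partial (i # L) G x" .
  qed
qed

lemma smooth_diff:
  assumes "open \<Omega>" "smooth_on \<Omega> F" "smooth_on \<Omega> G"
  shows "smooth_on \<Omega> (\<lambda>x. F x - G x)"
  unfolding smooth_on_def
proof (intro allI conjI ballI)
  fix L :: "'a list"
  have eq: "\<forall>x\<in>\<Omega>. foldr partial L (\<lambda>x. F x - G x) x = foldr partial L F x - foldr partial L G x"
    using foldr_partial_diff[OF assms] .
  have c: "continuous_on \<Omega> (\<lambda>x. foldr partial L F x - foldr partial L G x)"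
    using assms(2,3) unfolding smooth_on_def by (intro continuous_on_diff) auto
  show "continuous_on \<Omega> (foldr partial L (\<lambda>x. F x - G x))"
    by (rule continuous_on_cong[THEN iffD2, OF refl _ c]) (rule eq[rule_format])
  fix i x assume x: "x \<in> \<Omega>"
  define T where "T = {t::real. x + t *\<^sub>R axis i 1 \<in> \<Omega>}"
  have T: "open T" "0 \<in> T" using line_open[OF assms(1) x] unfolding T_def by auto
  have dF: "(\<lambda>t::real. foldr partial L F (x + t *\<^sub>R axis i 1)) differentiable (at 0)"
    using assms(2) x unfolding smooth_on_def by blast
  have dG: "(\<lambda>t::real. foldr partial L G (x + t *\<^sub>R axis i 1)) differentiable (at 0)"
    using assms(3) x unfolding smooth_on_def by blast
  have "(\<lambda>t::real. foldr partial L F (x + t *\<^sub>R axis i 1) - foldr partial L G (x + t *\<^sub>R axis i 1)) differentiable (at 0)"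
    using dF dG by (rule differentiable_diff)
  then obtain D where D: "((\<lambda>t::real. foldr partial L F (x + t *\<^sub>R axis i 1) - foldr partial L G (x + t *\<^sub>R axis i 1)) has_derivative D) (at 0)"
    unfolding differentiable_def by blast
  have "((\<lambda>t::real. foldr partial L (\<lambda>x. F x - G x) (x + t *\<^sub>R axis i 1)) has_derivative D) (at 0)"
    by (rule has_derivative_transform_within_open[OF D T]) (simp add: T_def eq)
  then show "(\<lambda>t::real. foldr partial L (\<lambda>x. F x - G x) (x + t *\<^sub>R axis i 1)) differentiable (at 0)"
    unfolding differentiable_def by blast
qed

lemma dmulti_diff:
  assumes "open \<Omega>" "smooth_on \<Omega> F" "smooth_on \<Omega> G" "x \<in> \<Omega>"
  shows "dmulti \<alpha> (\<lambda>x. F x - G x) x = dmulti \<alpha> F x - dmulti \<alpha> G x"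
proof -
  obtain L where L: "\<forall>g. dmulti \<alpha> g = foldr partial L g" using dmulti_foldr by blast
  show ?thesis using foldr_partial_diff[OF assms(1-3), of L] assms(4) by (simp add: L)
qed

lemma dmulti_cont:
  assumes "smooth_on \<Omega> F"
  shows "continuous_on \<Omega> (dmulti \<alpha> F)"
proof -
  obtain L where L: "\<forall>g. dmulti \<alpha> g = foldr partial L g" using dmulti_foldr by blast
  show ?thesis using assms unfolding smooth_on_def by (simp add: L)
qed

lemma uf_sub: "ultrafilter_on I U \<Longrightarrow> A \<in> U \<Longrightarrow> A \<subseteq> I"
  unfolding ultrafilter_on_def by (meson PowD subsetD)
lemma uf_top: "ultrafilter_on I U \<Longrightarrow> I \<in> U"
  unfolding ultrafilter_on_def by (elim conjE)
lemma uf_empty: "ultrafilter_on I U \<Longrightarrow> {} \<notin> U"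
  unfolding ultrafilter_on_def by (elim conjE)
lemma uf_int: "ultrafilter_on I U \<Longrightarrow> A \<in> U \<Longrightarrow> B \<in> U \<Longrightarrow> A \<inter> B \<in> U"
  unfolding ultrafilter_on_def by (elim conjE) (drule bspec, assumption, drule bspec, assumption)
lemma uf_up: "ultrafilter_on I U \<Longrightarrow> A \<in> U \<Longrightarrow> A \<subseteq> B \<Longrightarrow> B \<subseteq> I \<Longrightarrow> B \<in> U"
  unfolding ultrafilter_on_def by (elim conjE) (drule bspec, assumption, drule spec, erule mp, rule conjI)
lemma uf_compl: "ultrafilter_on I U \<Longrightarrow> A \<subseteq> I \<Longrightarrow> A \<notin> U \<Longrightarrow> I - A \<in> U"
  unfolding ultrafilter_on_def by (elim conjE) (drule spec, drule mp, assumption, erule disjE, erule notE, assumption, assumption)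

lemma ae_mono:
  assumes uf: "ultrafilter_on D0 U" and "ae U P" and "\<And>\<phi>. \<phi> \<in> D0 \<Longrightarrow> P \<phi> \<Longrightarrow> Q \<phi>"
  shows "ae U Q"
proof -
  have "{\<phi>\<in>D0. P \<phi>} \<in> U" using assms(2) unfolding ae_def .
  moreover have "{\<phi>\<in>D0. P \<phi>} \<subseteq> {\<phi>\<in>D0. Q \<phi>}" using assms(3) by blast
  ultimately show ?thesis unfolding ae_def by (rule uf_up[OF uf]) blast
qed

lemma ae_conj:
  assumes uf: "ultrafilter_on D0 U" and "ae U P" and "ae U Q"
  shows "ae U (\<lambda>\<phi>. P \<phi> \<and> Q \<phi>)"
proof -
  have "{\<phi>\<in>D0. P \<phi>} \<inter> {\<phi>\<in>D0. Q \<phi>} \<in> U" using assms unfolding ae_def by (intro uf_int[OF uf])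
  moreover have "{\<phi>\<in>D0. P \<phi>} \<inter> {\<phi>\<in>D0. Q \<phi>} = {\<phi>\<in>D0. P \<phi> \<and> Q \<phi>}" by blast
  ultimately show ?thesis unfolding ae_def by simp
qed

lemma ae_True:
  assumes uf: "ultrafilter_on D0 U" shows "ae U (\<lambda>\<phi>. True)"
  using uf_top[OF uf] unfolding ae_def by simp

lemma ae_set:
  assumes uf: "ultrafilter_on D0 U" and "A \<in> U" and "\<And>\<phi>. \<phi> \<in> A \<Longrightarrow> P \<phi>"
  shows "ae U P"
proof -
  have "A \<subseteq> D0" using uf_sub[OF uf assms(2)] .
  then have "A \<subseteq> {\<phi>\<in>D0. P \<phi>}" using assms(3) by blast
  then show ?thesis unfolding ae_def by (rule uf_up[OF uf assms(2)]) blast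
qed

lemma uf_finite_inter:
  assumes uf: "ultrafilter_on D0 U" and "finite T"
  shows "(\<forall>y\<in>T. C y \<in> U) \<longrightarrow> D0 \<inter> \<Inter>(C ` T) \<in> U"
  using assms(2)
proof (induction T rule: finite_induct)
  case empty then show ?case using uf_top[OF uf] by simp
next
  case (insert y T)
  show ?case
  proof
    assume h: "\<forall>z\<in>insert y T. C z \<in> U"
    then have "C y \<in> U" "D0 \<inter> \<Inter>(C ` T) \<in> U" using insert by auto
    then have "C y \<inter> (D0 \<inter> \<Inter>(C ` T)) \<in> U" by (rule uf_int[OF uf])
    moreover have "C y \<inter> (D0 \<inter> \<Inter>(C ` T)) = D0 \<inter> \<Inter>(C ` insert y T)" by auto
    ultimately show "D0 \<inter> \<Inter>(C ` insert y T) \<in> U" by simp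
  qed
qed

lemma ultralimit:
  fixes \<xi> :: "'d::finite fn \<Rightarrow> real^'d"
  assumes uf: "ultrafilter_on D0 U" and K: "compact K" and in_K: "\<forall>\<phi>\<in>D0. \<xi> \<phi> \<in> K"
  shows "\<exists>y\<in>K. \<forall>e>0. {\<phi>\<in>D0. dist (\<xi> \<phi>) y < e} \<in> U"
proof (rule ccontr)
  assume "\<not> ?thesis"
  then have "\<forall>y\<in>K. \<exists>e>0. {\<phi>\<in>D0. dist (\<xi> \<phi>) y < e} \<notin> U" by blast
  then obtain e where e: "\<And>y. y \<in> K \<Longrightarrow> e y > 0 \<and> {\<phi>\<in>D0. dist (\<xi> \<phi>) y < e y} \<notin> U"
    by (rule bchoice[THEN exE]) blast
  have cov: "K \<subseteq> (\<Union>y\<in>K. ball y (e y))"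
  proof
    fix y assume "y \<in> K" then show "y \<in> (\<Union>y\<in>K. ball y (e y))" using e[of y] by force
  qed
  obtain T where T: "T \<subseteq> K" "finite T" "K \<subseteq> (\<Union>y\<in>T. ball y (e y))"
    using compactE_image[OF K _ cov] by blast
  define C where "C y = D0 - {\<phi>\<in>D0. dist (\<xi> \<phi>) y < e y}" for y
  have "\<forall>y\<in>T. C y \<in> U"
  proof
    fix y assume "y \<in> T"
    then have "{\<phi>\<in>D0. dist (\<xi> \<phi>) y < e y} \<notin> U" using e T(1) by blast
    then show "C y \<in> U" unfolding C_def by (rule uf_compl[OF uf, rotated]) blast
  qed
  then have "D0 \<inter> \<Inter>(C ` T) \<in> U" using uf_finite_inter[OF uf T(2)] by blast
  then obtain \<phi> where \<phi>: "\<phi> \<in> D0 \<inter> \<Inter>(C ` T)" using uf_empty[OF uf] by (metis all_not_in_conv)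
  then have "\<xi> \<phi> \<in> K" using in_K by blast
  then obtain y where y: "y \<in> T" "\<xi> \<phi> \<in> ball y (e y)" using T(3) by blast
  then have "dist (\<xi> \<phi>) y < e y" by (simp add: dist_commute)
  then show False using \<phi> y unfolding C_def by blast
qed

lemma maxnet:
  assumes uf: "ultrafilter_on D0 U" and hE: "net_in_E \<Omega> h" and K: "compact K" "K \<subseteq> \<Omega>" "K \<noteq> {}"
  shows "\<exists>\<xi>. monad U \<Omega> \<xi> \<and> (\<forall>\<phi>\<in>D0. \<forall>x\<in>K. norm (dmulti \<alpha> (h \<phi>) x) \<le> norm (dmulti \<alpha> (h \<phi>) (\<xi> \<phi>)))"
proof -
  define \<xi> where "\<xi> \<phi> = (SOME z. z \<in> K \<and> (\<forall>x\<in>K. norm (dmulti \<alpha> (h \<phi>) x) \<le> norm (dmulti \<alpha> (h \<phi>) z)))" for \<phi>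
  have \<xi>: "\<xi> \<phi> \<in> K \<and> (\<forall>x\<in>K. norm (dmulti \<alpha> (h \<phi>) x) \<le> norm (dmulti \<alpha> (h \<phi>) (\<xi> \<phi>)))" if "\<phi> \<in> D0" for \<phi>
  proof -
    have "smooth_on \<Omega> (h \<phi>)" using hE that unfolding net_in_E_def by blast
    then have "continuous_on \<Omega> (dmulti \<alpha> (h \<phi>))" by (rule dmulti_cont)
    then have "continuous_on K (dmulti \<alpha> (h \<phi>))" using K(2) by (rule continuous_on_subset)
    then have "continuous_on K (\<lambda>x. norm (dmulti \<alpha> (h \<phi>) x))" by (rule continuous_on_norm)
    then have "\<exists>z\<in>K. \<forall>y\<in>K. norm (dmulti \<alpha> (h \<phi>) y) \<le> norm (dmulti \<alpha> (h \<phi>) z)"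
      using continuous_attains_sup[OF K(1) K(3)] by blast
    then have "\<exists>z. z \<in> K \<and> (\<forall>y\<in>K. norm (dmulti \<alpha> (h \<phi>) y) \<le> norm (dmulti \<alpha> (h \<phi>) z))" by blast
    then show ?thesis unfolding \<xi>_def by (rule someI_ex)
  qed
  obtain y where y: "y \<in> K" "\<forall>e>0. {\<phi>\<in>D0. dist (\<xi> \<phi>) y < e} \<in> U"
    using ultralimit[OF uf K(1)] \<xi> by blast
  have "monad U \<Omega> \<xi>" unfolding monad_def
  proof (intro bexI[of _ y] allI impI)
    fix n :: nat assume "n \<ge> 1"
    then have "{\<phi>\<in>D0. dist (\<xi> \<phi>) y < 1 / real n} \<in> U" using y(2) by simp
    then show "ae U (\<lambda>\<phi>. norm (\<xi> \<phi> - y) < 1 / real n)" unfolding ae_def by (simp add: dist_norm)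
  next
    show "y \<in> \<Omega>" using y(1) K(2) by blast
  qed
  then show ?thesis using \<xi> by blast
qed

lemma monad_ball:
  assumes uf: "ultrafilter_on D0 U" and "open \<Omega>" and "monad U \<Omega> \<xi>"
  shows "\<exists>K. compact K \<and> K \<subseteq> \<Omega> \<and> ae U (\<lambda>\<phi>. \<xi> \<phi> \<in> K)"
proof -
  obtain x where x: "x \<in> \<Omega>" "\<forall>n::nat. n \<ge> 1 \<longrightarrow> ae U (\<lambda>\<phi>. norm (\<xi> \<phi> - x) < 1 / real n)"
    using assms(3) unfolding monad_def by blast
  obtain r where r: "r > 0" "cball x r \<subseteq> \<Omega>" using open_contains_cball assms(2) x(1) by blast
  obtain m :: nat where m: "inverse (real (Suc m)) < r" using reals_Archimedean[OF r(1)] by blast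
  have "ae U (\<lambda>\<phi>. norm (\<xi> \<phi> - x) < 1 / real (Suc m))" by (rule x(2)[rule_format]) simp
  then have "ae U (\<lambda>\<phi>. \<xi> \<phi> \<in> cball x r)"
  proof (rule ae_mono[OF uf])
    fix \<phi> assume "norm (\<xi> \<phi> - x) < 1 / real (Suc m)"
    moreover have "dist x (\<xi> \<phi>) = norm (\<xi> \<phi> - x)" by (rule dist_commute[THEN trans, OF dist_norm])
    moreover have "1 / real (Suc m) = inverse (real (Suc m))" by (rule divide_inverse_commute[THEN trans]) simp
    ultimately have "dist x (\<xi> \<phi>) < r" using m by linarith
    then show "\<xi> \<phi> \<in> cball x r" by simp
  qed
  then show ?thesis using r(2) compact_cball[of x r] by blast
qed

lemma Rphi_pos:
  assumes \<phi>: "\<phi> \<in> D0" shows "Rphi \<phi> > 0"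
proof (cases "\<forall>x. \<phi> x = 0")
  case True then show ?thesis by (simp add: Rphi_def)
next
  case False
  then obtain x0 where x0: "\<phi> x0 \<noteq> 0" by blast
  have "continuous_on UNIV (foldr partial [] \<phi>)" using \<phi> unfolding D0_def smooth_on_def by blast
  then have cont: "continuous_on UNIV \<phi>" by simp
  have "open {x. \<phi> x \<noteq> (\<lambda>x. 0) x}" by (rule open_Collect_neq[OF cont continuous_on_const])
  then have opn: "open {x. \<phi> x \<noteq> 0}" by simp
  obtain e where e: "e > 0" "ball x0 e \<subseteq> {x. \<phi> x \<noteq> 0}" using open_contains_ball opn x0 by blast
  obtain z where z: "\<phi> z \<noteq> 0" "z \<noteq> 0"
  proof (cases "x0 = 0")
    case False then show ?thesis using that x0 by blast
  next
    case True
    define z where "z = (e/2) *\<^sub>R axis (undefined::'a) (1::real)"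
    have nz: "norm z = e/2" using e(1) unfolding z_def by (simp only: norm_scaleR norm_axis_1)
    then have "z \<in> ball x0 e" using True e(1) by (simp add: dist_norm)
    then have "\<phi> z \<noteq> 0" using e(2) by blast
    moreover have "z \<noteq> 0" using nz e(1) by auto
    ultimately show ?thesis using that by blast
  qed
  have "compact (closure {x. \<phi> x \<noteq> 0})" using \<phi> unfolding D0_def by blast
  then have "bounded (closure {x. \<phi> x \<noteq> 0})" by (rule compact_imp_bounded)
  then obtain B where B: "\<forall>y\<in>closure {x. \<phi> x \<noteq> 0}. norm y \<le> B" unfolding bounded_iff by blast
  have bdd: "bdd_above {norm x |x. \<phi> x \<noteq> 0}"
  proof (rule bdd_aboveI)
    fix t assume "t \<in> {norm x |x. \<phi> x \<noteq> 0}"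
    then obtain x where "t = norm x" "\<phi> x \<noteq> 0" by blast
    then have "x \<in> closure {x. \<phi> x \<noteq> 0}" using closure_subset[of "{x. \<phi> x \<noteq> 0}"] by blast
    then show "t \<le> B" using B \<open>t = norm x\<close> by simp
  qed
  have "norm z \<le> Sup {norm x |x. \<phi> x \<noteq> 0}" by (rule cSup_upper[OF _ bdd]) (use z(1) in blast)
  moreover have "norm z > 0" using z by simp
  ultimately have "Sup {norm x |x. \<phi> x \<noteq> 0} > 0" by linarith
  then show ?thesis using False by (simp add: Rphi_def)
qed

lemma Mod_imp_Mrho:
  assumes uf: "ultrafilter_on D0 U" and opn: "open \<Omega>" and M: "Mod U \<Omega> f"
  shows "Mrho_E U \<Omega> f"
  unfolding Mrho_E_def star_Mrho_def
proof (intro conjI allI impI)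
  show "net_in_E \<Omega> f" using M unfolding Mod_def by blast
  fix \<alpha> \<xi> assume "monad U \<Omega> \<xi>"
  then obtain K where K: "compact K" "K \<subseteq> \<Omega>" "ae U (\<lambda>\<phi>. \<xi> \<phi> \<in> K)"
    using monad_ball[OF uf opn] by blast
  obtain m :: nat where m: "m \<ge> 1" "ae U (\<lambda>\<phi>. \<forall>x\<in>K. norm (dmulti \<alpha> (f \<phi>) x) \<le> (1 / Rphi \<phi>) ^ m)"
    using M K unfolding Mod_def by blast
  have "ae U (\<lambda>\<phi>. norm (dmulti \<alpha> (f \<phi>) (\<xi> \<phi>)) \<le> (1 / Rphi \<phi>) ^ m)"
    by (rule ae_mono[OF uf ae_conj[OF uf K(3) m(2)]]) blast
  then show "\<exists>m::nat. m \<ge> 1 \<and> ae U (\<lambda>\<phi>. norm (dmulti \<alpha> (f \<phi>) (\<xi> \<phi>)) \<le> (1 / Rphi \<phi>) ^ m)"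
    using m(1) by blast
qed

lemma Mrho_imp_Mod:
  assumes uf: "ultrafilter_on D0 U" and M: "Mrho_E U \<Omega> f"
  shows "Mod U \<Omega> f"
  unfolding Mod_def
proof (intro conjI allI impI)
  show hE: "net_in_E \<Omega> f" using M unfolding Mrho_E_def by blast
  fix K \<alpha> assume K: "compact K \<and> K \<subseteq> \<Omega>"
  show "\<exists>m::nat. m \<ge> 1 \<and> ae U (\<lambda>\<phi>. \<forall>x\<in>K. norm (dmulti \<alpha> (f \<phi>) x) \<le> (1 / Rphi \<phi>) ^ m)"
  proof (cases "K = {}")
    case True then show ?thesis using ae_True[OF uf] by auto
  next
    case False
    obtain \<xi> where \<xi>: "monad U \<Omega> \<xi>" "\<forall>\<phi>\<in>D0. \<forall>x\<in>K. norm (dmulti \<alpha> (f \<phi>) x) \<le> norm (dmulti \<alpha> (f \<phi>) (\<xi> \<phi>))"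
      using maxnet[OF uf hE _ _ False, of \<alpha>] K by blast
    obtain m :: nat where m: "m \<ge> 1" "ae U (\<lambda>\<phi>. norm (dmulti \<alpha> (f \<phi>) (\<xi> \<phi>)) \<le> (1 / Rphi \<phi>) ^ m)"
      using M \<xi>(1) unfolding Mrho_E_def star_Mrho_def by blast
    have "ae U (\<lambda>\<phi>. \<forall>x\<in>K. norm (dmulti \<alpha> (f \<phi>) x) \<le> (1 / Rphi \<phi>) ^ m)"
    proof (rule ae_mono[OF uf m(2)])
      fix \<phi> assume "\<phi> \<in> D0" "norm (dmulti \<alpha> (f \<phi>) (\<xi> \<phi>)) \<le> (1 / Rphi \<phi>) ^ m"
      then show "\<forall>x\<in>K. norm (dmulti \<alpha> (f \<phi>) x) \<le> (1 / Rphi \<phi>) ^ m" using \<xi>(2) by (meson order_trans)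
    qed
    then show ?thesis using m(1) by blast
  qed
qed

lemma D2_ae:
  assumes uf: "ultrafilter_on D0 U" and D2: "Dn 2 \<in> U"
  shows "ae U (\<lambda>\<phi>. Rphi \<phi> \<le> 1 / 2)"
proof (rule ae_set[OF uf D2])
  fix \<phi> :: "'a fn" assume "\<phi> \<in> Dn 2"
  then show "Rphi \<phi> \<le> 1 / 2" unfolding Dn_def by simp
qed

lemma Neg_imp_Nrho:
  assumes uf: "ultrafilter_on D0 U" and opn: "open \<Omega>" and D2: "Dn 2 \<in> U" and N: "Neg U \<Omega> f"
  shows "Nrho_E U \<Omega> f"
  unfolding Nrho_E_def star_Nrho_def
proof (intro conjI allI impI)
  show "net_in_E \<Omega> f" using N unfolding Neg_def by blast
  fix \<alpha> \<xi> and n :: nat assume "monad U \<Omega> \<xi>" and n: "n \<ge> 1"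
  then obtain K where K: "compact K" "K \<subseteq> \<Omega>" "ae U (\<lambda>\<phi>. \<xi> \<phi> \<in> K)"
    using monad_ball[OF uf opn] by blast
  have b: "ae U (\<lambda>\<phi>. \<forall>x\<in>K. norm (dmulti \<alpha> (f \<phi>) x) \<le> Rphi \<phi> ^ Suc n)"
  proof -
    have "\<forall>K \<alpha> (p::nat). compact K \<and> K \<subseteq> \<Omega> \<and> p \<ge> 1 \<longrightarrow>
        ae U (\<lambda>\<phi>. \<forall>x\<in>K. norm (dmulti \<alpha> (f \<phi>) x) \<le> Rphi \<phi> ^ p)" using N unfolding Neg_def by blast
    then have "compact K \<and> K \<subseteq> \<Omega> \<and> Suc n \<ge> 1 \<longrightarrow>
        ae U (\<lambda>\<phi>. \<forall>x\<in>K. norm (dmulti \<alpha> (f \<phi>) x) \<le> Rphi \<phi> ^ Suc n)" by blast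
    then show ?thesis using K(1,2) by simp
  qed
  have all: "ae U (\<lambda>\<phi>. \<xi> \<phi> \<in> K \<and> (\<forall>x\<in>K. norm (dmulti \<alpha> (f \<phi>) x) \<le> Rphi \<phi> ^ Suc n) \<and> Rphi \<phi> \<le> 1/2)"
    using ae_conj[OF uf K(3) ae_conj[OF uf b D2_ae[OF uf D2]]] .
  show "ae U (\<lambda>\<phi>. norm (dmulti \<alpha> (f \<phi>) (\<xi> \<phi>)) < Rphi \<phi> ^ n)"
  proof (rule ae_mono[OF uf all])
    fix \<phi> assume \<phi>: "\<phi> \<in> D0" and h: "\<xi> \<phi> \<in> K \<and> (\<forall>x\<in>K. norm (dmulti \<alpha> (f \<phi>) x) \<le> Rphi \<phi> ^ Suc n) \<and> Rphi \<phi> \<le> 1/2"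
    have R: "Rphi \<phi> > 0" using Rphi_pos[OF \<phi>] .
    then have Rn: "Rphi \<phi> ^ n > 0" by simp
    have "norm (dmulti \<alpha> (f \<phi>) (\<xi> \<phi>)) \<le> Rphi \<phi> * Rphi \<phi> ^ n" using h by simp
    also have "\<dots> \<le> 1/2 * Rphi \<phi> ^ n" using h Rn by (intro mult_right_mono) auto
    also have "\<dots> < Rphi \<phi> ^ n" using Rn by simp
    finally show "norm (dmulti \<alpha> (f \<phi>) (\<xi> \<phi>)) < Rphi \<phi> ^ n" .
  qed
qed

lemma Nrho_imp_Neg:
  assumes uf: "ultrafilter_on D0 U" and N: "Nrho_E U \<Omega> f"
  shows "Neg U \<Omega> f"
  unfolding Neg_def
proof (intro conjI allI impI)
  show hE: "net_in_E \<Omega> f" using N unfolding Nrho_E_def by blast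
  fix K \<alpha> and p :: nat assume K: "compact K \<and> K \<subseteq> \<Omega> \<and> p \<ge> 1"
  show "ae U (\<lambda>\<phi>. \<forall>x\<in>K. norm (dmulti \<alpha> (f \<phi>) x) \<le> Rphi \<phi> ^ p)"
  proof (cases "K = {}")
    case True then show ?thesis using ae_True[OF uf] by auto
  next
    case False
    obtain \<xi> where \<xi>: "monad U \<Omega> \<xi>" "\<forall>\<phi>\<in>D0. \<forall>x\<in>K. norm (dmulti \<alpha> (f \<phi>) x) \<le> norm (dmulti \<alpha> (f \<phi>) (\<xi> \<phi>))"
      using maxnet[OF uf hE _ _ False, of \<alpha>] K by blast
    have m: "ae U (\<lambda>\<phi>. norm (dmulti \<alpha> (f \<phi>) (\<xi> \<phi>)) < Rphi \<phi> ^ p)"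
      using N \<xi>(1) K unfolding Nrho_E_def star_Nrho_def by blast
    show ?thesis
    proof (rule ae_mono[OF uf m])
      fix \<phi> assume "\<phi> \<in> D0" "norm (dmulti \<alpha> (f \<phi>) (\<xi> \<phi>)) < Rphi \<phi> ^ p"
      then show "\<forall>x\<in>K. norm (dmulti \<alpha> (f \<phi>) x) \<le> Rphi \<phi> ^ p" using \<xi>(2) by (meson order_trans less_imp_le)
    qed
  qed
qed

lemma smooth_of_Mod: "Mod U \<Omega> f \<Longrightarrow> \<phi> \<in> D0 \<Longrightarrow> smooth_on \<Omega> (f \<phi>)"
  unfolding Mod_def net_in_E_def by blast

lemma relMN_sym:
  assumes uf: "ultrafilter_on D0 U" and opn: "open \<Omega>" and fg: "(f, g) \<in> relMN U \<Omega>"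
  shows "(g, f) \<in> relMN U \<Omega>"
proof -
  have Mf: "Mod U \<Omega> f" and Mg: "Mod U \<Omega> g" and N: "Neg U \<Omega> (\<lambda>\<phi> x. f \<phi> x - g \<phi> x)"
    using fg unfolding relMN_def by auto
  have "Neg U \<Omega> (\<lambda>\<phi> x. g \<phi> x - f \<phi> x)"
    unfolding Neg_def
  proof (intro conjI allI impI)
    show "net_in_E \<Omega> (\<lambda>\<phi> x. g \<phi> x - f \<phi> x)" unfolding net_in_E_def
      using smooth_diff[OF opn smooth_of_Mod[OF Mg] smooth_of_Mod[OF Mf]] by blast
    fix K \<alpha> and p :: nat assume K: "compact K \<and> K \<subseteq> \<Omega> \<and> p \<ge> 1"
    have a: "ae U (\<lambda>\<phi>. \<forall>x\<in>K. norm (dmulti \<alpha> (\<lambda>x. f \<phi> x - g \<phi> x) x) \<le> Rphi \<phi> ^ p)"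
      using N K unfolding Neg_def by blast
    show "ae U (\<lambda>\<phi>. \<forall>x\<in>K. norm (dmulti \<alpha> (\<lambda>x. g \<phi> x - f \<phi> x) x) \<le> Rphi \<phi> ^ p)"
    proof (rule ae_mono[OF uf a], intro ballI)
      fix \<phi> x assume \<phi>: "\<phi> \<in> D0" and h: "\<forall>x\<in>K. norm (dmulti \<alpha> (\<lambda>x. f \<phi> x - g \<phi> x) x) \<le> Rphi \<phi> ^ p"
        and x: "x \<in> K"
      have xo: "x \<in> \<Omega>" using x K by blast
      have e1: "dmulti \<alpha> (\<lambda>x. f \<phi> x - g \<phi> x) x = dmulti \<alpha> (f \<phi>) x - dmulti \<alpha> (g \<phi>) x"
        by (rule dmulti_diff[OF opn smooth_of_Mod[OF Mf \<phi>] smooth_of_Mod[OF Mg \<phi>] xo])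
      have e2: "dmulti \<alpha> (\<lambda>x. g \<phi> x - f \<phi> x) x = dmulti \<alpha> (g \<phi>) x - dmulti \<alpha> (f \<phi>) x"
        by (rule dmulti_diff[OF opn smooth_of_Mod[OF Mg \<phi>] smooth_of_Mod[OF Mf \<phi>] xo])
      have "norm (dmulti \<alpha> (\<lambda>x. g \<phi> x - f \<phi> x) x) = norm (dmulti \<alpha> (\<lambda>x. f \<phi> x - g \<phi> x) x)"
        unfolding e1 e2 by (rule norm_minus_commute)
      then show "norm (dmulti \<alpha> (\<lambda>x. g \<phi> x - f \<phi> x) x) \<le> Rphi \<phi> ^ p" using h x by simp
    qed
  qed
  then show ?thesis using Mf Mg unfolding relMN_def by blast
qed

lemma relMN_trans:
  assumes uf: "ultrafilter_on D0 U" and opn: "open \<Omega>" and D2: "Dn 2 \<in> U"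
    and fg: "(f, g) \<in> relMN U \<Omega>" and gh: "(g, h) \<in> relMN U \<Omega>"
  shows "(f, h) \<in> relMN U \<Omega>"
proof -
  have Mf: "Mod U \<Omega> f" and Mg: "Mod U \<Omega> g" and N1: "Neg U \<Omega> (\<lambda>\<phi> x. f \<phi> x - g \<phi> x)"
    using fg unfolding relMN_def by auto
  have Mh: "Mod U \<Omega> h" and N2: "Neg U \<Omega> (\<lambda>\<phi> x. g \<phi> x - h \<phi> x)"
    using gh unfolding relMN_def by auto
  have "Neg U \<Omega> (\<lambda>\<phi> x. f \<phi> x - h \<phi> x)"
    unfolding Neg_def
  proof (intro conjI allI impI)
    show "net_in_E \<Omega> (\<lambda>\<phi> x. f \<phi> x - h \<phi> x)" unfolding net_in_E_def
      using smooth_diff[OF opn smooth_of_Mod[OF Mf] smooth_of_Mod[OF Mh]] by blast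
    fix K \<alpha> and p :: nat assume K: "compact K \<and> K \<subseteq> \<Omega> \<and> p \<ge> 1"
    have K': "compact K \<and> K \<subseteq> \<Omega> \<and> Suc p \<ge> 1" using K by simp
    have a1: "ae U (\<lambda>\<phi>. \<forall>x\<in>K. norm (dmulti \<alpha> (\<lambda>x. f \<phi> x - g \<phi> x) x) \<le> Rphi \<phi> ^ Suc p)"
      using N1 K' unfolding Neg_def by blast
    have a2: "ae U (\<lambda>\<phi>. \<forall>x\<in>K. norm (dmulti \<alpha> (\<lambda>x. g \<phi> x - h \<phi> x) x) \<le> Rphi \<phi> ^ Suc p)"
      using N2 K' unfolding Neg_def by blast
    show "ae U (\<lambda>\<phi>. \<forall>x\<in>K. norm (dmulti \<alpha> (\<lambda>x. f \<phi> x - h \<phi> x) x) \<le> Rphi \<phi> ^ p)"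
    proof (rule ae_mono[OF uf ae_conj[OF uf a1 ae_conj[OF uf a2 D2_ae[OF uf D2]]]], intro ballI)
      fix \<phi> x assume \<phi>: "\<phi> \<in> D0" and x: "x \<in> K" and
        h: "(\<forall>x\<in>K. norm (dmulti \<alpha> (\<lambda>x. f \<phi> x - g \<phi> x) x) \<le> Rphi \<phi> ^ Suc p) \<and>
            (\<forall>x\<in>K. norm (dmulti \<alpha> (\<lambda>x. g \<phi> x - h \<phi> x) x) \<le> Rphi \<phi> ^ Suc p) \<and> Rphi \<phi> \<le> 1/2"
      have xo: "x \<in> \<Omega>" using x K by blast
      have e1: "dmulti \<alpha> (\<lambda>x. f \<phi> x - g \<phi> x) x = dmulti \<alpha> (f \<phi>) x - dmulti \<alpha> (g \<phi>) x"
        by (rule dmulti_diff[OF opn smooth_of_Mod[OF Mf \<phi>] smooth_of_Mod[OF Mg \<phi>] xo])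
      have e2: "dmulti \<alpha> (\<lambda>x. g \<phi> x - h \<phi> x) x = dmulti \<alpha> (g \<phi>) x - dmulti \<alpha> (h \<phi>) x"
        by (rule dmulti_diff[OF opn smooth_of_Mod[OF Mg \<phi>] smooth_of_Mod[OF Mh \<phi>] xo])
      have e3: "dmulti \<alpha> (\<lambda>x. f \<phi> x - h \<phi> x) x = dmulti \<alpha> (f \<phi>) x - dmulti \<alpha> (h \<phi>) x"
        by (rule dmulti_diff[OF opn smooth_of_Mod[OF Mf \<phi>] smooth_of_Mod[OF Mh \<phi>] xo])
      have R: "Rphi \<phi> > 0" by (rule Rphi_pos[OF \<phi>])
      then have Rp: "Rphi \<phi> ^ p > 0" by simp
      have "dmulti \<alpha> (\<lambda>x. f \<phi> x - h \<phi> x) x = dmulti \<alpha> (\<lambda>x. f \<phi> x - g \<phi> x) x + dmulti \<alpha> (\<lambda>x. g \<phi> x - h \<phi> x) x"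
        unfolding e1 e2 e3 by simp
      then have "norm (dmulti \<alpha> (\<lambda>x. f \<phi> x - h \<phi> x) x) \<le>
          norm (dmulti \<alpha> (\<lambda>x. f \<phi> x - g \<phi> x) x) + norm (dmulti \<alpha> (\<lambda>x. g \<phi> x - h \<phi> x) x)"
        by (simp add: norm_triangle_ineq)
      also have "\<dots> \<le> Rphi \<phi> ^ Suc p + Rphi \<phi> ^ Suc p" using h x by (intro add_mono) auto
      also have "\<dots> = (2 * Rphi \<phi>) * Rphi \<phi> ^ p" by simp
      also have "\<dots> \<le> 1 * Rphi \<phi> ^ p" using h Rp by (intro mult_right_mono) auto
      finally show "norm (dmulti \<alpha> (\<lambda>x. f \<phi> x - h \<phi> x) x) \<le> Rphi \<phi> ^ p" by simp
    qed
  qed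
  then show ?thesis using Mf Mh unfolding relMN_def by blast
qed

lemma Phi_Union:
  assumes sym: "\<And>f g. (f, g) \<in> R \<Longrightarrow> (g, f) \<in> R"
    and trans: "\<And>f g h. (f, g) \<in> R \<Longrightarrow> (g, h) \<in> R \<Longrightarrow> (f, h) \<in> R"
    and S: "\<forall>A\<in>S. \<exists>h. A = R `` {h}"
  shows "(\<Union>f\<in>\<Union>S. R `` {f}) = \<Union>S"
proof
  show "(\<Union>f\<in>\<Union>S. R `` {f}) \<subseteq> \<Union>S"
  proof
    fix k assume "k \<in> (\<Union>f\<in>\<Union>S. R `` {f})"
    then obtain g A where gA: "A \<in> S" "g \<in> A" "(g, k) \<in> R" by blast
    then obtain h where h: "A = R `` {h}" using S by blast
    then have "(h, g) \<in> R" using gA by blast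
    then have "(h, k) \<in> R" using trans gA(3) by blast
    then show "k \<in> \<Union>S" using gA(1) h by blast
  qed
  show "\<Union>S \<subseteq> (\<Union>f\<in>\<Union>S. R `` {f})"
  proof
    fix g assume "g \<in> \<Union>S"
    then obtain A where gA: "A \<in> S" "g \<in> A" by blast
    then obtain h where h: "A = R `` {h}" using S by blast
    then have "(h, g) \<in> R" using gA by blast
    then have "(g, g) \<in> R" using sym trans by blast
    then show "g \<in> (\<Union>f\<in>\<Union>S. R `` {f})" using gA by blast
  qed
qed

theorem theorem7p12:
  fixes U :: "('d::finite fn) set set" and \<Omega> :: "(real^'d) set"
  assumes "open \<Omega>"
    and "free_ultrafilter_on D0 U"
    and "cplus_good U"
    and "\<forall>n::nat. n \<ge> 1 \<longrightarrow> Dn n \<in> U"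
  shows "(\<forall>f. net_in_E \<Omega> f \<longrightarrow> (Mod U \<Omega> f \<longleftrightarrow> Mrho_E U \<Omega> f))
    \<and> (\<forall>f. Mod U \<Omega> f \<longrightarrow> Phi U \<Omega> (relMN U \<Omega> `` {f}) = relRho U \<Omega> `` {f})
    \<and> bij_betw (Phi U \<Omega>) (Ehat U \<Omega>) (rhoE U \<Omega>)
    \<and> (\<forall>X\<in>Ehat U \<Omega>. \<forall>Y\<in>Ehat U \<Omega>.
          Phi U \<Omega> (qadd (relMN U \<Omega>) X Y) = qadd (relRho U \<Omega>) (Phi U \<Omega> X) (Phi U \<Omega> Y)
        \<and> Phi U \<Omega> (qmul (relMN U \<Omega>) X Y) = qmul (relRho U \<Omega>) (Phi U \<Omega> X) (Phi U \<Omega> Y))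
    \<and> (\<forall>c. \<forall>X\<in>Ehat U \<Omega>. Phi U \<Omega> (qscal (relMN U \<Omega>) c X) = qscal (relRho U \<Omega>) c (Phi U \<Omega> X))
    \<and> (\<forall>\<alpha>. \<forall>X\<in>Ehat U \<Omega>. Phi U \<Omega> (qder (relMN U \<Omega>) \<alpha> X) = qder (relRho U \<Omega>) \<alpha> (Phi U \<Omega> X))
    \<and> Phi U \<Omega> (qone (relMN U \<Omega>)) = qone (relRho U \<Omega>)"
proof -
  have uf: "ultrafilter_on D0 U" using assms(2) unfolding free_ultrafilter_on_def by blast
  have opn: "open \<Omega>" by (rule assms(1))
  have D2: "Dn 2 \<in> U" using assms(4) by simp
  have MM: "\<And>f. Mod U \<Omega> f \<longleftrightarrow> Mrho_E U \<Omega> f"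
    using Mod_imp_Mrho[OF uf opn] Mrho_imp_Mod[OF uf] by blast
  have NN: "\<And>f. Neg U \<Omega> f \<longleftrightarrow> Nrho_E U \<Omega> f"
    using Neg_imp_Nrho[OF uf opn D2] Nrho_imp_Neg[OF uf] by blast
  define R where "R = relRho U \<Omega>"
  have eq: "relMN U \<Omega> = R" unfolding R_def relMN_def relRho_def using MM NN by simp
  have sym: "\<And>f g. (f, g) \<in> R \<Longrightarrow> (g, f) \<in> R" using relMN_sym[OF uf opn] eq by blast
  have trans: "\<And>f g h. (f, g) \<in> R \<Longrightarrow> (g, h) \<in> R \<Longrightarrow> (f, h) \<in> R"
    using relMN_trans[OF uf opn D2] eq by blast
  have PhiU: "Phi U \<Omega> (\<Union>S) = \<Union>S" if "\<forall>A\<in>S. \<exists>h. A = R `` {h}" for S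
    unfolding Phi_def R_def[symmetric] by (rule Phi_Union[OF sym trans that])
  have PhiC: "Phi U \<Omega> (R `` {h}) = R `` {h}" for h
  proof -
    have "Phi U \<Omega> (\<Union>{R `` {h}}) = \<Union>{R `` {h}}" by (rule PhiU) (simp, rule exI, rule refl)
    then show ?thesis by simp
  qed
  have CC: "{f. Mod U \<Omega> f} = {f. Mrho_E U \<Omega> f}" using MM by blast
  have EE: "Ehat U \<Omega> = rhoE U \<Omega>" unfolding Ehat_def rhoE_def using CC eq R_def by simp
  have PhiE: "Phi U \<Omega> X = X" if X: "X \<in> Ehat U \<Omega>" for X
  proof -
    have "X \<in> {f. Mod U \<Omega> f} // R" using X eq unfolding Ehat_def by simp
    then obtain f where "X = R `` {f}" by (auto elim: quotientE)
    then show ?thesis using PhiC by simp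
  qed
  have P1: "\<forall>f. net_in_E \<Omega> f \<longrightarrow> (Mod U \<Omega> f \<longleftrightarrow> Mrho_E U \<Omega> f)" using MM by blast
  have P2: "\<forall>f. Mod U \<Omega> f \<longrightarrow> Phi U \<Omega> (relMN U \<Omega> `` {f}) = relRho U \<Omega> `` {f}"
    using PhiC eq R_def by simp
  have P3: "bij_betw (Phi U \<Omega>) (Ehat U \<Omega>) (rhoE U \<Omega>)"
  proof -
    have "bij_betw id (Ehat U \<Omega>) (Ehat U \<Omega>)" by (rule bij_betw_id)
    then have "bij_betw (Phi U \<Omega>) (Ehat U \<Omega>) (Ehat U \<Omega>)"
      by (rule bij_betw_cong[THEN iffD2, rotated]) (simp add: PhiE)
    then show ?thesis using EE by simp
  qed
  have Qa: "Phi U \<Omega> (qadd R X Y) = qadd R X Y" for X Y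
    unfolding qadd_def by (rule PhiU) blast
  have Qm: "Phi U \<Omega> (qmul R X Y) = qmul R X Y" for X Y
    unfolding qmul_def by (rule PhiU) blast
  have Qs: "Phi U \<Omega> (qscal R c X) = qscal R c X" for c X
    unfolding qscal_def by (rule PhiU) blast
  have Qd: "Phi U \<Omega> (qder R \<alpha> X) = qder R \<alpha> X" for \<alpha> X
    unfolding qder_def by (rule PhiU) blast
  have P4: "\<forall>X\<in>Ehat U \<Omega>. \<forall>Y\<in>Ehat U \<Omega>.
          Phi U \<Omega> (qadd (relMN U \<Omega>) X Y) = qadd (relRho U \<Omega>) (Phi U \<Omega> X) (Phi U \<Omega> Y)
        \<and> Phi U \<Omega> (qmul (relMN U \<Omega>) X Y) = qmul (relRho U \<Omega>) (Phi U \<Omega> X) (Phi U \<Omega> Y)"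
    using PhiE Qa Qm eq R_def by simp
  have P5: "\<forall>c. \<forall>X\<in>Ehat U \<Omega>. Phi U \<Omega> (qscal (relMN U \<Omega>) c X) = qscal (relRho U \<Omega>) c (Phi U \<Omega> X)"
    using PhiE Qs eq R_def by simp
  have P6: "\<forall>\<alpha>. \<forall>X\<in>Ehat U \<Omega>. Phi U \<Omega> (qder (relMN U \<Omega>) \<alpha> X) = qder (relRho U \<Omega>) \<alpha> (Phi U \<Omega> X)"
    using PhiE Qd eq R_def by simp
  have P7: "Phi U \<Omega> (qone (relMN U \<Omega>)) = qone (relRho U \<Omega>)"
    unfolding qone_def using PhiC eq R_def by simp
  show ?thesis using P1 P2 P3 P4 P5 P6 P7 by (intro conjI)
qed

end
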